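(* Let $N>1$ be an integer, let $0<\epsilon<e$, let $\tfrac12<\beta<1$, and let $k$ be an integer with $\beta^kN>1$. Set $K=\lceil \log(e/\epsilon)/\log(\beta/(1-\beta))\rceil$. Then there exist functions $c_1,\dots,c_K:[0,N]\to\mathbb{R}$ and $r_1,\dots,r_K:[\beta^kN,\beta^{k-1}N]\to\mathbb{R}$ such that $g_k(x,y)=\sum_{i=1}^K c_i(x)r_i(y)$ satisfies \[ \left|\Lambda\!\left(\tfrac{x+y}{2}\right)-g_k(x,y)\right|\le\epsilon\qquad\text{for all }(x,y)\in[0,N]\times[\beta^kN,\beta^{k-1}N], \] where $\Lambda(z)=\Gamma(z+1/2)/\Gamma(z+1)$.
   Context: $\Gamma$ denotes the gamma function; $e$ is Euler's number; $\log$ is the natural logarithm. A function of the form $\sum_{i=1}^K c_i(x)r_i(y)$ is said to have rank at most $K$. *)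

theory Defs
  imports "HOL-Analysis.Analysis"
begin

definition Lambda :: "real \<Rightarrow> real" where
  "Lambda z = Gamma (z + 1/2) / Gamma (z + 1)"

end

theory Submission imports Defs begin

lemma pow_fact_le_exp:
  fixes x :: real assumes "0 \<le> x"
  shows "x ^ j / fact j \<le> exp x"
proof -
  have "x ^ j / fact j \<le> (\<Sum>n\<le>j. x ^ n / fact n)"
    by (rule member_le_sum) (use assms in auto)
  also have "\<dots> \<le> exp x"
    using assms summable_exp_generic[of x]
    by (auto simp: exp_def divide_inverse ac_simps intro!: sum_le_suminf)
  finally show ?thesis .
qed

lemma phi_bound:
  fixes s A :: real assumes "0 < s" "s < 1" "0 < A"
  shows "s powr A * \<bar>ln s\<bar> ^ j / fact j \<le> (1 / A) ^ j"
proof -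
  define u where "u = - ln s"
  have u: "u > 0" using assms by (simp add: u_def)
  have sA: "s powr A = exp (- (A * u))" using assms by (simp add: powr_def u_def)
  have "(A * u) ^ j / fact j \<le> exp (A * u)" by (rule pow_fact_le_exp) (use u assms in auto)
  hence "A ^ j * (u ^ j / fact j) \<le> exp (A * u)" by (simp add: power_mult_distrib)
  hence "u ^ j / fact j \<le> exp (A * u) / A ^ j" using assms by (simp add: field_simps)
  hence "exp (- (A * u)) * (u ^ j / fact j) \<le> exp (- (A * u)) * (exp (A * u) / A ^ j)"
    by (intro mult_left_mono) auto
  also have "\<dots> = (1 / A) ^ j" by (simp add: exp_minus field_simps power_one_over)
  moreover have "\<bar>ln s\<bar> = u" using assms by (simp add: u_def)
  ultimately show ?thesis by (simp add: sA)
qed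

lemma exp_taylor_neg:
  fixes v :: real assumes "v \<le> 0" "0 < n"
  shows "\<bar>exp v - (\<Sum>m<n. v ^ m / fact m)\<bar> \<le> \<bar>v\<bar> ^ n / fact n"
proof (cases "v = 0")
  case True
  obtain m where "n = Suc m" using assms gr0_conv_Suc by auto
  then show ?thesis using True by (simp add: sum.lessThan_Suc_shift del: sum.lessThan_Suc)
next
  case False
  hence "v < 0" using assms by simp
  from Maclaurin_minus[OF this assms(2), where diff="\<lambda>_. exp" and f=exp]
  obtain t where t: "v < t" "t < 0" "exp v = (\<Sum>m<n. exp 0 / fact m * v ^ m) + exp t / fact n * v ^ n"
    by auto
  have "\<bar>exp v - (\<Sum>m<n. v ^ m / fact m)\<bar> = exp t / fact n * \<bar>v\<bar> ^ n"
    using t(3) by (simp add: abs_mult power_abs)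
  also have "\<dots> \<le> 1 / fact n * \<bar>v\<bar> ^ n"
    using t by (intro mult_right_mono divide_right_mono) auto
  finally show ?thesis by simp
qed

lemma sum_shift1: fixes K :: nat shows "(\<Sum>i = 1..K. F (i - 1)) = (\<Sum>j<K. (F j :: real))"
  by (induction K) (auto simp: lessThan_Suc)


definition Ic :: "real \<Rightarrow> nat \<Rightarrow> real \<Rightarrow> real" where
  "Ic a j x = integral {0<..<1} (\<lambda>s. s powr ((x + a)/2 - 1/2) * (1 - s) powr (-1/2) * (ln s) ^ j / fact j)"

lemma core:
  fixes a x h t :: real and K :: nat
  assumes a: "a > 0" and x: "x \<ge> 0" and h: "h \<ge> 0" and ht: "h * (2 / a) \<le> t" and K: "K > 0"
  shows "\<bar>Lambda ((x + a + 2*h)/2) - (\<Sum>j<K. h ^ j * Ic a j x) / sqrt pi\<bar> \<le> t ^ K * sqrt pi"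
proof -
  define S :: "real set" where "S = {0<..<1}"
  have Sl: "S \<in> sets lebesgue" by (simp add: S_def)
  define g where "g s = s powr (x/2 - 1/2) * (1 - s) powr (-1/2)" for s :: real
  define phi where "phi j s = s powr (a/2) * (ln s) ^ j / fact j" for j :: nat and s :: real
  define z where "z = (x + a + 2*h)/2"
  have z: "z > 0" using a x h by (simp add: z_def)
  have hg: "(g has_integral Beta (x/2 + 1/2) (1/2)) S"
  proof -
    have "((\<lambda>s. s powr (x/2 + 1/2 - 1) * (1 - s) powr (1/2 - 1)) has_integral Beta (x/2 + 1/2) (1/2)) {0..1}"
      by (rule has_integral_Beta_real) (use x in auto)
    moreover have "x/2 + 1/2 - 1 = x/2 - 1/2" "(1/2 - 1 :: real) = -1/2" by simp_all
    ultimately show ?thesis unfolding g_def S_def by (simp only: has_integral_Icc_iff_Ioo)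
  qed
  have g0: "g s \<ge> 0" for s by (simp add: g_def)
  have gabs: "g absolutely_integrable_on S"
    by (rule nonnegative_absolutely_integrable_1) (use hg g0 in auto)
  have phib: "\<bar>phi j s\<bar> \<le> (2 / a) ^ j" if "s \<in> S" for j s
  proof -
    have "s powr (a/2) * \<bar>ln s\<bar> ^ j / fact j \<le> (1 / (a/2)) ^ j"
      by (rule phi_bound) (use that a in \<open>auto simp: S_def\<close>)
    thus ?thesis by (simp add: phi_def abs_mult power_abs)
  qed
  have fabs: "(\<lambda>s. phi j s * g s) absolutely_integrable_on S" for j
  proof (rule absolutely_integrable_bounded_measurable_product_real[OF _ Sl _ gabs])
    have "continuous_on S (phi j)" unfolding phi_def S_def
      by (intro continuous_intros) auto
    thus "phi j \<in> borel_measurable (lebesgue_on S)"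
      by (rule continuous_imp_measurable_on_sets_lebesgue[OF _ Sl])
    show "bounded (phi j ` S)"
      unfolding bounded_iff using phib by auto
  qed
  have fint: "((\<lambda>s. phi j s * g s) has_integral Ic a j x) S" for j
  proof -
    have "(\<lambda>s. phi j s * g s) integrable_on S"
      using set_lebesgue_integral_eq_integral(1)[OF fabs] .
    moreover have "Ic a j x = integral S (\<lambda>s. phi j s * g s)"
      unfolding Ic_def S_def
    proof (rule integral_cong)
      fix s :: real assume "s \<in> {0<..<1}"
      hence s: "s > 0" by auto
      have "s powr ((x + a)/2 - 1/2) = s powr (a/2) * s powr (x/2 - 1/2)"
        using s by (simp add: powr_add[symmetric] algebra_simps add_divide_distrib)
      thus "s powr ((x + a)/2 - 1/2) * (1 - s) powr (-1/2) * (ln s) ^ j / fact j = phi j s * g s"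
        by (simp add: phi_def g_def)
    qed
    ultimately show ?thesis by (simp add: integrable_integral)
  qed
  have hsum: "((\<lambda>s. \<Sum>j<K. h ^ j * (phi j s * g s)) has_integral (\<Sum>j<K. h ^ j * Ic a j x)) S"
    by (intro has_integral_sum has_integral_mult_right fint) auto
  have hT: "((\<lambda>s. s powr (z + 1/2 - 1) * (1 - s) powr (1/2 - 1)) has_integral Beta (z + 1/2) (1/2)) S"
    unfolding S_def by (subst has_integral_Icc_iff_Ioo[symmetric], rule has_integral_Beta_real) (use z in auto)
  define D where "D s = s powr (z + 1/2 - 1) * (1 - s) powr (1/2 - 1) - (\<Sum>j<K. h ^ j * (phi j s * g s))" for s
  have hD: "(D has_integral (Beta (z + 1/2) (1/2) - (\<Sum>j<K. h ^ j * Ic a j x))) S"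
    unfolding D_def by (rule has_integral_diff[OF hT hsum])
  have Dbound: "norm (D s) \<le> t ^ K * g s" if "s \<in> S" for s
  proof -
    have s: "s > 0" "s < 1" using that by (auto simp: S_def)
    have e1: "s powr (z + 1/2 - 1) = s powr (x/2 - 1/2) * s powr (a/2) * exp (h * ln s)"
    proof -
      have zeq: "z + 1/2 - 1 = (x/2 - 1/2) + a/2 + h" by (simp add: z_def field_simps)
      have "s powr (z + 1/2 - 1) = s powr ((x/2 - 1/2) + a/2 + h)" by (simp only: zeq)
      also have "\<dots> = s powr (x/2 - 1/2) * s powr (a/2) * s powr h"
        by (simp only: powr_add)
      also have "s powr h = exp (h * ln s)" using s by (simp add: powr_def)
      finally show ?thesis by simp
    qed
    have e2: "(\<Sum>j<K. h ^ j * (phi j s * g s)) = g s * s powr (a/2) * (\<Sum>j<K. (h * ln s) ^ j / fact j)"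
      by (simp add: sum_distrib_left phi_def power_mult_distrib mult_ac)
    have Deq: "D s = g s * s powr (a/2) * (exp (h * ln s) - (\<Sum>j<K. (h * ln s) ^ j / fact j))"
      unfolding D_def e2 e1 by (simp add: g_def algebra_simps)
    have tay: "\<bar>exp (h * ln s) - (\<Sum>j<K. (h * ln s) ^ j / fact j)\<bar> \<le> \<bar>h * ln s\<bar> ^ K / fact K"
      by (rule exp_taylor_neg) (use s h K in \<open>auto simp: mult_nonneg_nonpos\<close>)
    have "norm (D s) = g s * s powr (a/2) * \<bar>exp (h * ln s) - (\<Sum>j<K. (h * ln s) ^ j / fact j)\<bar>"
      using g0 by (simp add: Deq abs_mult)
    also have "\<dots> \<le> g s * s powr (a/2) * (\<bar>h * ln s\<bar> ^ K / fact K)"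
      by (intro mult_left_mono tay) (use g0 in auto)
    also have "\<dots> = g s * h ^ K * (s powr (a/2) * \<bar>ln s\<bar> ^ K / fact K)"
      using h by (simp add: abs_mult power_mult_distrib)
    also have "\<dots> \<le> g s * h ^ K * (2 / a) ^ K"
    proof -
      have "s powr (a/2) * \<bar>ln s\<bar> ^ K / fact K \<le> (1 / (a/2)) ^ K"
        by (rule phi_bound) (use s a in auto)
      thus ?thesis by (intro mult_left_mono) (use g0 h in auto)
    qed
    also have "\<dots> = g s * (h * (2 / a)) ^ K" by (simp only: power_mult_distrib mult.assoc)
    also have "\<dots> \<le> g s * t ^ K"
      by (intro mult_left_mono power_mono ht) (use g0 h a in auto)
    finally show ?thesis by (simp add: mult.commute)
  qed
  have gint: "((\<lambda>s. t ^ K * g s) has_integral t ^ K * Beta (x/2 + 1/2) (1/2)) S"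
    by (intro has_integral_mult_right hg)
  have "norm (Beta (z + 1/2) (1/2) - (\<Sum>j<K. h ^ j * Ic a j x)) \<le> t ^ K * Beta (x/2 + 1/2) (1/2)"
  proof -
    have "norm (integral S D) \<le> integral S (\<lambda>s. t ^ K * g s)"
      by (rule integral_norm_bound_integral) (use hD gint Dbound in auto)
    thus ?thesis using hD hg by (simp add: integral_unique)
  qed
  also have "\<dots> \<le> t ^ K * Beta (1/2) (1/2)"
  proof -
    have "t \<ge> 0" using ht h a by (smt (verit) divide_nonneg_nonneg mult_nonneg_nonneg)
    thus ?thesis by (intro mult_left_mono Beta_real_mono) (use x in auto)
  qed
  also have "Beta (1/2) (1/2) = pi" by (simp add: Beta_def Gamma_one_half_real)
  finally have B: "\<bar>Beta (z + 1/2) (1/2) - (\<Sum>j<K. h ^ j * Ic a j x)\<bar> \<le> t ^ K * pi" by simp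
  have L: "Lambda z = Beta (z + 1/2) (1/2) / sqrt pi"
    by (simp add: Lambda_def Beta_def Gamma_one_half_real add_ac)
  have sp: "sqrt pi > 0" by simp
  have "\<bar>Lambda z - (\<Sum>j<K. h ^ j * Ic a j x) / sqrt pi\<bar>
        = \<bar>Beta (z + 1/2) (1/2) - (\<Sum>j<K. h ^ j * Ic a j x)\<bar> / sqrt pi"
    using sp by (simp add: L diff_divide_distrib[symmetric])
  also have "\<dots> \<le> t ^ K * pi / sqrt pi" by (rule divide_right_mono[OF B]) simp
  also have "\<dots> = t ^ K * sqrt pi"
    by (metis pi_ge_zero real_div_sqrt times_divide_eq_right)
  finally show ?thesis by (simp add: z_def)
qed


theorem lemma3p4:
  fixes N :: int and \<epsilon> \<beta> :: real and k :: int
  assumes "N > 1"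
    and "0 < \<epsilon>" and "\<epsilon> < exp 1"
    and "1/2 < \<beta>" and "\<beta> < 1"
    and "\<beta> powi k * real_of_int N > 1"
  defines "K \<equiv> nat \<lceil>ln (exp 1 / \<epsilon>) / ln (\<beta> / (1 - \<beta>))\<rceil>"
  shows "\<exists>c r :: nat \<Rightarrow> real \<Rightarrow> real.
           \<forall>x \<in> {0 .. real_of_int N}.
           \<forall>y \<in> {\<beta> powi k * real_of_int N .. \<beta> powi (k - 1) * real_of_int N}.
             \<bar>Lambda ((x + y) / 2) - (\<Sum>i = 1..K. c i x * r i y)\<bar> \<le> \<epsilon>"
proof -
  define a where "a = \<beta> powi k * real_of_int N"
  have a1: "a > 1" using assms by (simp add: a_def)
  have b0: "\<beta> > 0" using assms by simp
  have aup: "\<beta> powi (k - 1) * real_of_int N = a / \<beta>"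
    using b0 by (simp add: a_def power_int_diff)
  define t where "t = (1 - \<beta>) / \<beta>"
  define L where "L = ln (exp 1 / \<epsilon>)"
  define M where "M = ln (\<beta> / (1 - \<beta>))"
  have L0: "L > 0" using assms by (simp add: L_def)
  have M0: "M > 0" using assms by (simp add: M_def)
  have K: "K = nat \<lceil>L / M\<rceil>" by (simp add: K_def L_def M_def)
  have Kpos: "K > 0" using L0 M0 by (simp add: K)
  have KM: "real K * M \<ge> L"
  proof -
    have "real K \<ge> L / M" unfolding K by linarith
    thus ?thesis using M0 by (simp add: field_simps)
  qed
  have t0: "t > 0" using assms by (simp add: t_def)
  have lnt: "ln t = - M" using assms by (simp add: t_def M_def ln_div)
  have "t ^ K = exp (- (real K * M))"
    using t0 lnt by (metis exp_ln exp_of_nat_mult mult_minus_right)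
  also have "\<dots> \<le> exp (- L)" using KM by simp
  also have "exp (- L) = \<epsilon> / exp 1" using assms by (simp add: L_def exp_minus)
  finally have tK: "t ^ K \<le> \<epsilon> / exp 1" .
  have spi: "sqrt pi \<le> exp 1"
  proof -
    have "sqrt pi \<le> sqrt 4" using pi_less_4 by (intro real_sqrt_le_mono) simp
    also have "\<dots> = 2" by simp
    also have "2 \<le> exp (1::real)" using exp_ge_add_one_self[of 1] by simp
    finally show ?thesis .
  qed
  have fin: "t ^ K * sqrt pi \<le> \<epsilon>"
  proof -
    have "t ^ K * sqrt pi \<le> (\<epsilon> / exp 1) * exp 1"
      by (intro mult_mono tK spi) (use assms t0 in auto)
    thus ?thesis by simp
  qed
  show ?thesis
  proof (intro exI ballI)
    fix x y assume x: "x \<in> {0 .. real_of_int N}"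
      and y: "y \<in> {\<beta> powi k * real_of_int N .. \<beta> powi (k - 1) * real_of_int N}"
    define h where "h = (y - a) / 2"
    have y': "a \<le> y" "y \<le> a / \<beta>" using y by (auto simp: a_def aup)
    have h0: "h \<ge> 0" using y' by (simp add: h_def)
    have ht: "h * (2 / a) \<le> t"
    proof -
      have "h * (2 / a) = y / a - 1" using a1 by (simp add: h_def field_simps)
      also have "\<dots> \<le> (a / \<beta>) / a - 1" using divide_right_mono[OF y'(2), of a] a1 by simp
      also have "\<dots> = t" using a1 b0 by (simp add: t_def field_simps)
      finally show ?thesis .
    qed
    have C: "\<bar>Lambda ((x + a + 2*h)/2) - (\<Sum>j<K. h ^ j * Ic a j x) / sqrt pi\<bar> \<le> t ^ K * sqrt pi"
      by (rule core) (use a1 x h0 ht Kpos in auto)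
    have "(\<Sum>i = 1..K. Ic a (i - 1) x / sqrt pi * ((y - a) / 2) ^ (i - 1))
          = (\<Sum>j<K. Ic a j x / sqrt pi * h ^ j)"
      using sum_shift1[where F = "\<lambda>j. Ic a j x / sqrt pi * h ^ j"] by (simp add: h_def)
    also have "\<dots> = (\<Sum>j<K. h ^ j * Ic a j x) / sqrt pi"
      by (simp add: sum_divide_distrib mult_ac)
    finally have S: "(\<Sum>i = 1..K. Ic a (i - 1) x / sqrt pi * ((y - a) / 2) ^ (i - 1))
          = (\<Sum>j<K. h ^ j * Ic a j x) / sqrt pi" .
    have xy: "x + a + 2*h = x + y" by (simp add: h_def field_simps)
    have C': "\<bar>Lambda ((x + y)/2) - (\<Sum>j<K. h ^ j * Ic a j x) / sqrt pi\<bar> \<le> \<epsilon>"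
      using C fin unfolding xy by linarith
    show "\<bar>Lambda ((x + y) / 2) - (\<Sum>i = 1..K. (\<lambda>i x. Ic a (i - 1) x / sqrt pi) i x * (\<lambda>i y. ((y - a) / 2) ^ (i - 1)) i y)\<bar> \<le> \<epsilon>"
      using C' by (simp add: S[simplified])
  qed
qed

end
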